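(* Let $K$ be a field of characteristic $p>0$, $R=K[x_0,\dots,x_n]$, $\mathfrak{m}=(x_0,\dots,x_n)$, $q=p^e$ and $\mathfrak{m}^{[q]}=(x_0^q,\dots,x_n^q)$. Let $d$ be a positive integer. Then \[\mathfrak{m}^{[q]}:_R\mathfrak{m}^{(n+1)(d-2)+1}\subseteq\mathfrak{m}^{[q]}+\mathfrak{m}^{(n+1)(q-d+1)},\] where $\mathfrak{m}^i=R$ for $i\leqslant0$. *)

theory Defs
  imports Main "HOL-Library.Poly_Mapping"
begin

text \<open>Multivariate polynomials over 'a: finitely supported maps from monomials
(exponent vectors, finitely supported nat-valued functions on nat) to coefficients.\<close>

type_synonym 'a mpoly = "(nat \<Rightarrow>\<^sub>0 nat) \<Rightarrow>\<^sub>0 'a"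

definition polyR :: "nat \<Rightarrow> 'a::comm_ring_1 mpoly set" where
  "polyR n = {f. \<forall>m \<in> Poly_Mapping.keys f. Poly_Mapping.keys (m :: nat \<Rightarrow>\<^sub>0 nat) \<subseteq> {..n}}"

definition Var :: "nat \<Rightarrow> 'a::comm_ring_1 mpoly" where
  "Var i = Poly_Mapping.single (Poly_Mapping.single i 1) 1"

definition ideal_gen :: "nat \<Rightarrow> 'a::comm_ring_1 mpoly set \<Rightarrow> 'a mpoly set" where
  "ideal_gen n S = {(\<Sum>i<k. c i * g i) | (k::nat) c g. \<forall>i<k. c i \<in> polyR n \<and> g i \<in> S}"

definition ideal_sum :: "'a::comm_ring_1 mpoly set \<Rightarrow> 'a mpoly set \<Rightarrow> 'a mpoly set" where
  "ideal_sum I J = {a + b | a b. a \<in> I \<and> b \<in> J}"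

definition ideal_prod :: "nat \<Rightarrow> 'a::comm_ring_1 mpoly set \<Rightarrow> 'a mpoly set \<Rightarrow> 'a mpoly set" where
  "ideal_prod n I J = ideal_gen n {a * b | a b. a \<in> I \<and> b \<in> J}"

primrec ideal_pow :: "nat \<Rightarrow> 'a::comm_ring_1 mpoly set \<Rightarrow> nat \<Rightarrow> 'a mpoly set" where
  "ideal_pow n I 0 = polyR n"
| "ideal_pow n I (Suc k) = ideal_prod n I (ideal_pow n I k)"

definition ideal_ipow :: "nat \<Rightarrow> 'a::comm_ring_1 mpoly set \<Rightarrow> int \<Rightarrow> 'a mpoly set" where
  "ideal_ipow n I i = (if i \<le> 0 then polyR n else ideal_pow n I (nat i))"

definition ideal_colon :: "nat \<Rightarrow> 'a::comm_ring_1 mpoly set \<Rightarrow> 'a mpoly set \<Rightarrow> 'a mpoly set" where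
  "ideal_colon n I J = {f \<in> polyR n. \<forall>g \<in> J. f * g \<in> I}"

definition max_ideal :: "nat \<Rightarrow> 'a::comm_ring_1 mpoly set" where
  "max_ideal n = ideal_gen n {Var i | i. i \<le> n}"

definition frob_pow :: "nat \<Rightarrow> nat \<Rightarrow> 'a::comm_ring_1 mpoly set" where
  "frob_pow n q = ideal_gen n {Var i ^ q | i. i \<le> n}"

end

theory Submission
  imports Defs
begin

lemma lookup_single_if: "Poly_Mapping.lookup (Poly_Mapping.single k v) k' = (if k = k' then v else 0)"
  by (simp add: Poly_Mapping.lookup_single when_def)

lemma sum_closed:
  assumes "0 \<in> S" "\<And>x y. x \<in> S \<Longrightarrow> y \<in> S \<Longrightarrow> x + y \<in> S" "finite A"
    "\<And>a. a \<in> A \<Longrightarrow> h a \<in> S"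
  shows "sum h A \<in> S"
  using assms(3,4)
proof (induction A rule: finite_induct)
  case empty then show ?case using assms(1) by simp
next
  case (insert x F) then show ?case using assms(2) by simp
qed

lemma polyR_0: "0 \<in> polyR n" by (simp add: polyR_def)

lemma polyR_add: "f \<in> polyR n \<Longrightarrow> g \<in> polyR n \<Longrightarrow> f + g \<in> polyR n"
proof -
  assume f: "f \<in> polyR n" and g: "g \<in> polyR n"
  { fix m assume "m \<in> Poly_Mapping.keys (f + g)"
    then have "m \<in> Poly_Mapping.keys f \<or> m \<in> Poly_Mapping.keys g"
      using Poly_Mapping.keys_add[of f g] by auto
    then have "Poly_Mapping.keys m \<subseteq> {..n}" using f g unfolding polyR_def by auto }
  then show ?thesis unfolding polyR_def by auto
qed

lemma polyR_mult: "f \<in> polyR n \<Longrightarrow> g \<in> polyR n \<Longrightarrow> f * g \<in> polyR n"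
proof -
  assume f: "f \<in> polyR n" and g: "g \<in> polyR n"
  { fix m assume "m \<in> Poly_Mapping.keys (f * g)"
    then obtain a b where ab: "m = a + b" "a \<in> Poly_Mapping.keys f" "b \<in> Poly_Mapping.keys g"
      using Poly_Mapping.keys_mult[of f g] by auto
    have "Poly_Mapping.keys a \<subseteq> {..n}" "Poly_Mapping.keys b \<subseteq> {..n}"
      using ab f g unfolding polyR_def by auto
    then have "Poly_Mapping.keys m \<subseteq> {..n}"
      using ab(1) Poly_Mapping.keys_add[of a b] by auto }
  then show ?thesis unfolding polyR_def by auto
qed

lemma polyR_single: "Poly_Mapping.keys m \<subseteq> {..n} \<Longrightarrow> Poly_Mapping.single m c \<in> polyR n"
  unfolding polyR_def by auto

lemma polyR_one: "1 \<in> polyR n"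
  unfolding polyR_def by auto

lemma sum_lessThan_add_nat: "(\<Sum>i<k1+k2. h i) = (\<Sum>i<k1. h i) + (\<Sum>i<k2. h (k1 + i))"
  for h :: "nat \<Rightarrow> 'b::comm_monoid_add"
  by (induction k2) (auto simp: add.assoc)

lemma ideal_gen_0: "0 \<in> ideal_gen n S"
  unfolding ideal_gen_def by (rule CollectI, rule exI[of _ 0]) auto

lemma ideal_gen_gen: "c \<in> polyR n \<Longrightarrow> s \<in> S \<Longrightarrow> c * s \<in> ideal_gen n S"
  unfolding ideal_gen_def
  by (rule CollectI, rule exI[of _ 1], rule exI[of _ "\<lambda>_. c"], rule exI[of _ "\<lambda>_. s"]) auto

lemma ideal_gen_add:
  assumes "x \<in> ideal_gen n S" "y \<in> ideal_gen n S"
  shows "x + y \<in> ideal_gen n S"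
proof -
  obtain k1 :: nat and c1 g1 where 1: "x = (\<Sum>i<k1. c1 i * g1 i)" "\<forall>i<k1. c1 i \<in> polyR n \<and> g1 i \<in> S"
    using assms(1) unfolding ideal_gen_def by auto
  obtain k2 :: nat and c2 g2 where 2: "y = (\<Sum>i<k2. c2 i * g2 i)" "\<forall>i<k2. c2 i \<in> polyR n \<and> g2 i \<in> S"
    using assms(2) unfolding ideal_gen_def by auto
  define c where "c i = (if i < k1 then c1 i else c2 (i - k1))" for i
  define g where "g i = (if i < k1 then g1 i else g2 (i - k1))" for i
  have "(\<Sum>i<k1+k2. c i * g i) = (\<Sum>i<k1. c i * g i) + (\<Sum>i<k2. c (k1+i) * g (k1+i))"
    by (rule sum_lessThan_add_nat)
  also have "\<dots> = x + y" unfolding 1 2 c_def g_def by simp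
  finally have "x + y = (\<Sum>i<k1+k2. c i * g i)" by simp
  moreover have "\<forall>i<k1+k2. c i \<in> polyR n \<and> g i \<in> S"
    using 1 2 unfolding c_def g_def by auto
  ultimately show ?thesis unfolding ideal_gen_def by blast
qed

lemma ideal_gen_sum:
  "finite A \<Longrightarrow> (\<And>a. a \<in> A \<Longrightarrow> h a \<in> ideal_gen n S) \<Longrightarrow> sum h A \<in> ideal_gen n S"
  by (rule sum_closed[OF ideal_gen_0 ideal_gen_add])

lemma ideal_pow_0: "0 \<in> ideal_pow n I k"
  by (cases k) (auto simp: polyR_0 ideal_prod_def ideal_gen_0)

lemma ideal_pow_add: "x \<in> ideal_pow n I k \<Longrightarrow> y \<in> ideal_pow n I k \<Longrightarrow> x + y \<in> ideal_pow n I k"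
  by (cases k) (auto simp: polyR_add ideal_prod_def ideal_gen_add)

lemma ideal_ipow_0: "0 \<in> ideal_ipow n I K"
  by (auto simp: ideal_ipow_def polyR_0 ideal_pow_0)

lemma ideal_ipow_add: "x \<in> ideal_ipow n I K \<Longrightarrow> y \<in> ideal_ipow n I K \<Longrightarrow> x + y \<in> ideal_ipow n I K"
  by (auto simp: ideal_ipow_def polyR_add ideal_pow_add split: if_splits)

definition deg :: "nat \<Rightarrow> (nat \<Rightarrow>\<^sub>0 nat) \<Rightarrow> nat" where
  "deg n m = (\<Sum>i\<le>n. Poly_Mapping.lookup m i)"

lemma Var_in_max: "i \<le> n \<Longrightarrow> Var i \<in> max_ideal n"
  unfolding max_ideal_def using ideal_gen_gen[OF polyR_one, of "Var i" "{Var i |i. i \<le> n}" n] by auto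

lemma mono_in_pow:
  "Poly_Mapping.keys \<beta> \<subseteq> {..n} \<Longrightarrow> k \<le> deg n \<beta> \<Longrightarrow>
   (Poly_Mapping.single \<beta> c :: 'a::comm_ring_1 mpoly) \<in> ideal_pow n (max_ideal n) k"
proof (induction k arbitrary: \<beta> c)
  case 0 then show ?case by (simp add: polyR_single)
next
  case (Suc k)
  then have "0 < deg n \<beta>" by simp
  then obtain i where i: "i \<le> n" "0 < Poly_Mapping.lookup \<beta> i"
    unfolding deg_def by (metis gr0I sum_nonneg_eq_0_iff finite_atMost zero_le atMost_iff)
  define \<beta>' where "\<beta>' = \<beta> - Poly_Mapping.single i 1"
  have eq: "\<beta> = \<beta>' + Poly_Mapping.single i 1"
    by (rule poly_mapping_eqI) (use i in \<open>auto simp: \<beta>'_def Poly_Mapping.lookup_add lookup_minus lookup_single_if\<close>)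
  have keys: "Poly_Mapping.keys \<beta>' \<subseteq> {..n}"
  proof
    fix x assume "x \<in> Poly_Mapping.keys \<beta>'"
    then have "Poly_Mapping.lookup \<beta> x \<noteq> 0" by (auto simp: \<beta>'_def in_keys_iff lookup_minus)
    then have "x \<in> Poly_Mapping.keys \<beta>" by (simp add: in_keys_iff)
    then show "x \<in> {..n}" using Suc.prems(1) by blast
  qed
  have "deg n \<beta> = deg n \<beta>' + (\<Sum>j\<le>n. Poly_Mapping.lookup (Poly_Mapping.single i (1::nat)) j)"
    unfolding deg_def by (subst eq) (simp add: Poly_Mapping.lookup_add sum.distrib)
  also have "(\<Sum>j\<le>n. Poly_Mapping.lookup (Poly_Mapping.single i (1::nat)) j) = 1"
    using i by (simp add: lookup_single_if)
  finally have "k \<le> deg n \<beta>'" using Suc.prems(2) by simp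
  then have IH: "Poly_Mapping.single \<beta>' c \<in> ideal_pow n (max_ideal n) k"
    using Suc.IH keys by blast
  have "(Poly_Mapping.single \<beta> c :: 'a mpoly) = 1 * (Var i * Poly_Mapping.single \<beta>' c)"
    by (subst eq) (simp add: Var_def mult_single add.commute)
  also have "\<dots> \<in> ideal_pow n (max_ideal n) (Suc k)"
    unfolding ideal_pow.simps ideal_prod_def
    by (rule ideal_gen_gen[OF polyR_one]) (use Var_in_max[OF i(1)] IH in blast)
  finally show ?case .
qed

lemma mono_in_ipow:
  "Poly_Mapping.keys \<beta> \<subseteq> {..n} \<Longrightarrow> K \<le> int (deg n \<beta>) \<Longrightarrow>
   (Poly_Mapping.single \<beta> c :: 'a::comm_ring_1 mpoly) \<in> ideal_ipow n (max_ideal n) K"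
  unfolding ideal_ipow_def using polyR_single mono_in_pow[of \<beta> n "nat K" c] by auto

lemma Var_pow: "(Var i :: 'a::comm_ring_1 mpoly) ^ q = Poly_Mapping.single (Poly_Mapping.single i q) 1"
  by (induction q) (simp_all add: Var_def mult_single single_add[symmetric])

lemma mono_in_frob:
  assumes "Poly_Mapping.keys m \<subseteq> {..n}" "i \<le> n" "q \<le> Poly_Mapping.lookup m i"
  shows "(Poly_Mapping.single m c :: 'a::comm_ring_1 mpoly) \<in> frob_pow n q"
proof -
  define m' where "m' = m - Poly_Mapping.single i q"
  have eq: "m = m' + Poly_Mapping.single i q"
    by (rule poly_mapping_eqI) (use assms(3) in \<open>auto simp: m'_def Poly_Mapping.lookup_add lookup_minus lookup_single_if\<close>)
  have keys: "Poly_Mapping.keys m' \<subseteq> {..n}"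
  proof
    fix x assume "x \<in> Poly_Mapping.keys m'"
    then have "Poly_Mapping.lookup m x \<noteq> 0" by (auto simp: m'_def in_keys_iff lookup_minus)
    then have "x \<in> Poly_Mapping.keys m" by (simp add: in_keys_iff)
    then show "x \<in> {..n}" using assms(1) by blast
  qed
  have "(Poly_Mapping.single m c :: 'a mpoly) = Poly_Mapping.single m' c * Var i ^ q"
    by (subst eq) (simp add: Var_pow mult_single)
  also have "\<dots> \<in> frob_pow n q"
    unfolding frob_pow_def
    by (rule ideal_gen_gen[OF polyR_single[OF keys]]) (use assms(2) in blast)
  finally show ?thesis .
qed

lemma frob_keys:
  assumes "(f :: 'a::comm_ring_1 mpoly) \<in> frob_pow n q"
  shows "\<forall>m \<in> Poly_Mapping.keys f. \<exists>i\<le>n. q \<le> Poly_Mapping.lookup m i"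
proof -
  define S :: "'a mpoly set" where "S = {f. \<forall>m \<in> Poly_Mapping.keys f. \<exists>i\<le>n. q \<le> Poly_Mapping.lookup m i}"
  have S0: "0 \<in> S" unfolding S_def by simp
  have Sadd: "x + y \<in> S" if "x \<in> S" "y \<in> S" for x y
  proof -
    { fix m assume "m \<in> Poly_Mapping.keys (x + y)"
      then have "m \<in> Poly_Mapping.keys x \<or> m \<in> Poly_Mapping.keys y"
        using Poly_Mapping.keys_add[of x y] by auto
      then have "\<exists>i\<le>n. q \<le> Poly_Mapping.lookup m i" using that unfolding S_def by auto }
    then show ?thesis unfolding S_def by auto
  qed
  have Sgen: "c * Var j ^ q \<in> S" if "j \<le> n" for c :: "'a mpoly" and j
  proof -
    { fix m assume "m \<in> Poly_Mapping.keys (c * Var j ^ q)"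
      then obtain a b where ab: "m = a + b" "b \<in> Poly_Mapping.keys (Var j ^ q :: 'a mpoly)"
        using Poly_Mapping.keys_mult[of c "Var j ^ q"] by auto
      then have "b = Poly_Mapping.single j q" by (simp add: Var_pow split: if_splits)
      then have "q \<le> Poly_Mapping.lookup m j" using ab(1) by (simp add: Poly_Mapping.lookup_add)
      then have "\<exists>i\<le>n. q \<le> Poly_Mapping.lookup m i" using that by blast }
    then show ?thesis unfolding S_def by auto
  qed
  obtain k :: nat and c g where fk: "f = (\<Sum>i<k. c i * g i)" "\<forall>i<k. c i \<in> polyR n \<and> g i \<in> {Var i ^ q | i. i \<le> n}"
    using assms unfolding frob_pow_def ideal_gen_def by auto
  have "f \<in> S" unfolding fk(1)
    by (rule sum_closed[OF S0 Sadd]) (use fk(2) Sgen in auto)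
  then show ?thesis unfolding S_def by simp
qed

lemma mono_decomp: "f = (\<Sum>m\<in>Poly_Mapping.keys f. Poly_Mapping.single m (Poly_Mapping.lookup f m))"
  by (rule poly_mapping_eqI) (auto simp: lookup_sum lookup_single_if in_keys_iff)

lemma pm_cancel: "x + \<beta> = m + (\<beta> :: nat \<Rightarrow>\<^sub>0 nat) \<Longrightarrow> x = m"
proof (rule poly_mapping_eqI)
  fix i assume "x + \<beta> = m + \<beta>"
  then have "Poly_Mapping.lookup (x + \<beta>) i = Poly_Mapping.lookup (m + \<beta>) i" by simp
  then show "Poly_Mapping.lookup x i = Poly_Mapping.lookup m i" by (simp add: Poly_Mapping.lookup_add)
qed

lemma lookup_mult_single_shift:
  fixes f :: "'a::comm_ring_1 mpoly"
  shows "Poly_Mapping.lookup (f * Poly_Mapping.single \<beta> 1) (m + \<beta>) = Poly_Mapping.lookup f m"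
proof -
  have "f * Poly_Mapping.single \<beta> 1 = (\<Sum>m'\<in>Poly_Mapping.keys f. Poly_Mapping.single (m' + \<beta>) (Poly_Mapping.lookup f m'))"
    by (subst mono_decomp[of f]) (simp add: sum_distrib_right mult_single)
  then have "Poly_Mapping.lookup (f * Poly_Mapping.single \<beta> 1) (m + \<beta>)
     = (\<Sum>x\<in>Poly_Mapping.keys f. if x + \<beta> = m + \<beta> then Poly_Mapping.lookup f x else 0)"
    by (simp add: lookup_sum lookup_single_if)
  also have "\<dots> = (\<Sum>x\<in>Poly_Mapping.keys f. if x = m then Poly_Mapping.lookup f x else 0)"
    by (rule sum.cong) (auto dest: pm_cancel)
  also have "\<dots> = Poly_Mapping.lookup f m"
    by (cases "m \<in> Poly_Mapping.keys f") (auto simp: in_keys_iff)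
  finally show ?thesis .
qed

lemma beta_exists:
  fixes u :: "nat \<Rightarrow> nat"
  shows "k \<le> (\<Sum>i\<le>n. u i) \<Longrightarrow> \<exists>\<beta>. Poly_Mapping.keys \<beta> \<subseteq> {..n} \<and> (\<forall>i\<le>n. Poly_Mapping.lookup \<beta> i \<le> u i) \<and> deg n \<beta> = k"
proof (induction n arbitrary: k)
  case 0
  show ?case
    by (rule exI[of _ "Poly_Mapping.single 0 k"]) (use 0 in \<open>auto simp: deg_def\<close>)
next
  case (Suc n)
  define t where "t = min k (u (Suc n))"
  have "k - t \<le> (\<Sum>i\<le>n. u i)" using Suc.prems by (auto simp: t_def)
  then obtain \<beta>' where b: "Poly_Mapping.keys \<beta>' \<subseteq> {..n}" "\<forall>i\<le>n. Poly_Mapping.lookup \<beta>' i \<le> u i" "deg n \<beta>' = k - t"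
    using Suc.IH by blast
  have z: "Poly_Mapping.lookup \<beta>' (Suc n) = 0" using b(1) by (auto simp: in_keys_iff)
  define \<beta> where "\<beta> = \<beta>' + Poly_Mapping.single (Suc n) t"
  have "Poly_Mapping.keys \<beta> \<subseteq> {..Suc n}"
    using b(1) Poly_Mapping.keys_add[of \<beta>' "Poly_Mapping.single (Suc n) t"] unfolding \<beta>_def
    by (auto split: if_split_asm)
  moreover have "\<forall>i\<le>Suc n. Poly_Mapping.lookup \<beta> i \<le> u i"
    using b(2) z by (auto simp: \<beta>_def Poly_Mapping.lookup_add lookup_single_if t_def le_Suc_eq)
  moreover have "deg (Suc n) \<beta> = k"
  proof -
    have "deg (Suc n) \<beta> = (\<Sum>i\<le>n. Poly_Mapping.lookup \<beta> i) + Poly_Mapping.lookup \<beta> (Suc n)"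
      by (simp add: deg_def)
    also have "(\<Sum>i\<le>n. Poly_Mapping.lookup \<beta> i) = deg n \<beta>'"
      unfolding deg_def \<beta>_def by (rule sum.cong) (auto simp: Poly_Mapping.lookup_add lookup_single_if)
    also have "Poly_Mapping.lookup \<beta> (Suc n) = t" using z by (simp add: \<beta>_def Poly_Mapping.lookup_add)
    finally show ?thesis using b(3) by (simp add: t_def)
  qed
  ultimately show ?case by blast
qed

theorem lemma3p2:
  fixes p e n d :: nat
  assumes "CHAR('a::field) = p" and "p > 0"
    and "q = p ^ e"
    and "d > 0"
  shows "(ideal_colon n (frob_pow n q :: 'a mpoly set)
            (ideal_ipow n (max_ideal n) ((int n + 1) * (int d - 2) + 1)))
         \<subseteq> ideal_sum (frob_pow n q)
              (ideal_ipow n (max_ideal n) ((int n + 1) * (int q - int d + 1)))"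
proof
  define K where "K = (int n + 1) * (int d - 2) + 1"
  define K' where "K' = (int n + 1) * (int q - int d + 1)"
  have q1: "q \<ge> 1" using assms(2,3) by simp
  fix f :: "'a mpoly"
  assume "f \<in> ideal_colon n (frob_pow n q) (ideal_ipow n (max_ideal n) ((int n + 1) * (int d - 2) + 1))"
  then have fR: "f \<in> polyR n" and fc: "\<And>g. g \<in> ideal_ipow n (max_ideal n) K \<Longrightarrow> f * g \<in> frob_pow n q"
    unfolding ideal_colon_def K_def by auto
  have keysR: "Poly_Mapping.keys m \<subseteq> {..n}" if "m \<in> Poly_Mapping.keys f" for m
    using fR that unfolding polyR_def by auto
  define P where "P m = (\<exists>i\<le>n. q \<le> Poly_Mapping.lookup m i)" for m :: "nat \<Rightarrow>\<^sub>0 nat"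
  define A where "A = {m \<in> Poly_Mapping.keys f. P m}"
  define B where "B = {m \<in> Poly_Mapping.keys f. \<not> P m}"
  define h where "h m = Poly_Mapping.single m (Poly_Mapping.lookup f m)" for m
  have fin: "finite A" "finite B" unfolding A_def B_def by auto
  have "f = sum h (Poly_Mapping.keys f)" unfolding h_def by (rule mono_decomp)
  also have "Poly_Mapping.keys f = A \<union> B" unfolding A_def B_def by auto
  also have "sum h (A \<union> B) = sum h A + sum h B"
    by (rule sum.union_disjoint) (use fin in \<open>auto simp: A_def B_def\<close>)
  finally have feq: "f = sum h A + sum h B" .
  have a: "sum h A \<in> frob_pow n q"
    unfolding frob_pow_def
  proof (rule ideal_gen_sum[OF fin(1)])
    fix m assume "m \<in> A"
    then obtain i where "i \<le> n" "q \<le> Poly_Mapping.lookup m i" "m \<in> Poly_Mapping.keys f"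
      unfolding A_def P_def by auto
    then show "h m \<in> ideal_gen n {Var i ^ q |i. i \<le> n}"
      using mono_in_frob[OF keysR] unfolding h_def frob_pow_def by blast
  qed
  have key: "K' \<le> int (deg n m)" if mB: "m \<in> B" for m
  proof (rule ccontr)
    assume lt: "\<not> K' \<le> int (deg n m)"
    have mk: "m \<in> Poly_Mapping.keys f" and lq: "\<forall>i\<le>n. Poly_Mapping.lookup m i < q"
      using mB unfolding B_def P_def by auto
    define u where "u i = q - 1 - Poly_Mapping.lookup m i" for i
    have "int (\<Sum>i\<le>n. u i) = (\<Sum>i\<le>n. (int q - 1 - int (Poly_Mapping.lookup m i)))"
      unfolding of_nat_sum using lq by (intro sum.cong) (auto simp: u_def of_nat_diff)
    also have "\<dots> = (int n + 1) * (int q - 1) - int (deg n m)"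
      by (simp add: sum_subtractf deg_def of_nat_sum)
    finally have su: "int (\<Sum>i\<le>n. u i) = (int n + 1) * (int q - 1) - int (deg n m)" .
    have alg: "(int n + 1) * (int q - 1) - K' = K - 1"
      unfolding K_def K'_def by (simp add: algebra_simps)
    have "nat K \<le> (\<Sum>i\<le>n. u i)" using su alg lt by linarith
    then obtain \<beta> where b: "Poly_Mapping.keys \<beta> \<subseteq> {..n}" "\<forall>i\<le>n. Poly_Mapping.lookup \<beta> i \<le> u i"
      "deg n \<beta> = nat K"
      using beta_exists by blast
    have "(Poly_Mapping.single \<beta> 1 :: 'a mpoly) \<in> ideal_ipow n (max_ideal n) K"
      by (rule mono_in_ipow[OF b(1)]) (use b(3) in simp)
    then have fg: "f * Poly_Mapping.single \<beta> 1 \<in> frob_pow n q" by (rule fc)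
    have "Poly_Mapping.lookup (f * Poly_Mapping.single \<beta> 1) (m + \<beta>) \<noteq> 0"
      using mk by (simp add: lookup_mult_single_shift in_keys_iff)
    then have "m + \<beta> \<in> Poly_Mapping.keys (f * Poly_Mapping.single \<beta> 1)" by (simp add: in_keys_iff)
    then obtain i where i: "i \<le> n" "q \<le> Poly_Mapping.lookup (m + \<beta>) i"
      using frob_keys[OF fg] by blast
    have "Poly_Mapping.lookup (m + \<beta>) i = Poly_Mapping.lookup m i + Poly_Mapping.lookup \<beta> i"
      by (simp add: Poly_Mapping.lookup_add)
    also have "\<dots> \<le> q - 1" using b(2) i(1) lq unfolding u_def by fastforce
    finally show False using i(2) q1 by simp
  qed
  have b: "sum h B \<in> ideal_ipow n (max_ideal n) K'"
  proof (rule sum_closed[OF ideal_ipow_0 ideal_ipow_add fin(2)])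
    fix m assume "m \<in> B"
    then show "h m \<in> ideal_ipow n (max_ideal n) K'"
      unfolding h_def using mono_in_ipow keysR key unfolding B_def by blast
  qed
  show "f \<in> ideal_sum (frob_pow n q) (ideal_ipow n (max_ideal n) ((int n + 1) * (int q - int d + 1)))"
    unfolding ideal_sum_def K'_def[symmetric] using feq a b by blast
qed

end
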